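(* For every integer $t\ge 0$ there is a constant $c_t$ such that every graph $G$ with $\mathrm{tww}(G)\le t$ satisfies $\alpha_2^*(G)\le c_t\,\alpha_2(G)$, where $\alpha_2(G)$ is the maximum size of a set of vertices of $G$ pairwise at distance at least $3$ in $G$, and $\alpha_2^*(G)$ is the optimum value of the linear program: maximize $\sum_{x\in V(G)}w(x)$ subject to $\sum_{y\in N[x]}w(y)\le 1$ for all $x\in V(G)$ and $0\le w(x)\le 1$ for all $x\in V(G)$.
   Context: $N[x]$ is the closed neighborhood of $x$ (its neighbors and $x$ itself). A trigraph $H$ consists of a vertex set $V(H)$ and two disjoint sets of unordered pairs of distinct vertices: black edges $E(H)$ and red edges $R(H)$. Two vertices are adjacent (neighbors) if they are joined by a black or a red edge. The red graph of $H$ is the graph $(V(H),R(H))$; $H$ is a $d$-trigraph if its red graph has maximum degree at most $d$. A graph is a trigraph with no red edges. Contracting two distinct vertices $u,v$ of a trigraph $H$ yields the trigraph obtained by deleting $u$ and $v$ and adding a new vertex $z$ such that, for every other vertex $x$: $zx$ is a black edge if both $ux$ and $vx$ are black edges; $zx$ is not an edge if $x$ is adjacent to neither $u$ nor $v$; and $zx$ is a red edge otherwise. All edges not incident to $u$ or $v$ are unchanged. A $d$-sequence of an $n$-vertex graph $G$ is a sequence of $d$-trigraphs $G=G_n,G_{n-1},\dots,G_1$ such that $G_1$ has a single vertex and each $G_{i-1}$ is obtained from $G_i$ by one contraction (so $G_i$ has $i$ vertices). The twin-width $\mathrm{tww}(G)$ of $G$ is the minimum $d$ such that $G$ admits a $d$-sequence.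 *)

theory Defs
  imports Complex_Main
begin

record trigraph =
  verts :: "nat set"
  black :: "nat set set"
  red   :: "nat set set"

definition pairs_of :: "nat set \<Rightarrow> nat set set" where
  "pairs_of V = {{x, y} | x y. x \<in> V \<and> y \<in> V \<and> x \<noteq> y}"

definition is_trigraph :: "trigraph \<Rightarrow> bool" where
  "is_trigraph H \<longleftrightarrow> finite (verts H) \<and> black H \<subseteq> pairs_of (verts H)
     \<and> red H \<subseteq> pairs_of (verts H) \<and> black H \<inter> red H = {}"

definition is_graph :: "trigraph \<Rightarrow> bool" where
  "is_graph G \<longleftrightarrow> is_trigraph G \<and> red G = {}"

definition adj :: "trigraph \<Rightarrow> nat \<Rightarrow> nat \<Rightarrow> bool" where
  "adj H x y \<longleftrightarrow> {x, y} \<in> black H \<union> red H"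

definition red_degree :: "trigraph \<Rightarrow> nat \<Rightarrow> nat" where
  "red_degree H x = card {y \<in> verts H. {x, y} \<in> red H}"

definition d_trigraph :: "nat \<Rightarrow> trigraph \<Rightarrow> bool" where
  "d_trigraph d H \<longleftrightarrow> (\<forall>x \<in> verts H. red_degree H x \<le> d)"

definition contract :: "trigraph \<Rightarrow> nat \<Rightarrow> nat \<Rightarrow> nat \<Rightarrow> trigraph" where
  "contract H u v z =
     (let W = verts H - {u, v} in
      \<lparr> verts = insert z W,
        black = {e \<in> black H. u \<notin> e \<and> v \<notin> e}
                \<union> {{z, x} | x. x \<in> W \<and> {u, x} \<in> black H \<and> {v, x} \<in> black H},
        red = {e \<in> red H. u \<notin> e \<and> v \<notin> e}
                \<union> {{z, x} | x. x \<in> W \<and> (adj H u x \<or> adj H v x)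
                        \<and> \<not> ({u, x} \<in> black H \<and> {v, x} \<in> black H)} \<rparr>)"

definition contracts_to :: "trigraph \<Rightarrow> trigraph \<Rightarrow> bool" where
  "contracts_to H H' \<longleftrightarrow> (\<exists>u v z. u \<in> verts H \<and> v \<in> verts H \<and> u \<noteq> v
       \<and> z \<notin> verts H \<and> H' = contract H u v z)"

text \<open>A d-sequence G = G_n, ..., G_1 of G, represented as the list [G_n, ..., G_1].\<close>
definition d_sequence :: "nat \<Rightarrow> trigraph \<Rightarrow> trigraph list \<Rightarrow> bool" where
  "d_sequence d G Gs \<longleftrightarrow> Gs \<noteq> [] \<and> hd Gs = G \<and> card (verts (last Gs)) = 1
     \<and> (\<forall>i. Suc i < length Gs \<longrightarrow> contracts_to (Gs ! i) (Gs ! Suc i))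
     \<and> (\<forall>H \<in> set Gs. d_trigraph d H)"

definition tww :: "trigraph \<Rightarrow> nat" where
  "tww G = (LEAST d. \<exists>Gs. d_sequence d G Gs)"

definition closed_nbhd :: "trigraph \<Rightarrow> nat \<Rightarrow> nat set" where
  "closed_nbhd G x = insert x {y \<in> verts G. adj G x y}"

text \<open>Distance at least 3 between vertices x and y (infinite distance allowed).\<close>
definition dist_ge3 :: "trigraph \<Rightarrow> nat \<Rightarrow> nat \<Rightarrow> bool" where
  "dist_ge3 G x y \<longleftrightarrow> x \<noteq> y \<and> \<not> adj G x y \<and> \<not> (\<exists>z \<in> verts G. adj G x z \<and> adj G z y)"

definition alpha2 :: "trigraph \<Rightarrow> nat" where
  "alpha2 G = Max {card S | S. S \<subseteq> verts G
       \<and> (\<forall>x \<in> S. \<forall>y \<in> S. x \<noteq> y \<longrightarrow> dist_ge3 G x y)}"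

definition alpha2_feasible :: "trigraph \<Rightarrow> (nat \<Rightarrow> real) \<Rightarrow> bool" where
  "alpha2_feasible G w \<longleftrightarrow>
     (\<forall>x \<in> verts G. (\<Sum>y \<in> closed_nbhd G x. w y) \<le> 1)
     \<and> (\<forall>x \<in> verts G. 0 \<le> w x \<and> w x \<le> 1)"

definition alpha2_star :: "trigraph \<Rightarrow> real" where
  "alpha2_star G = Sup {(\<Sum>x \<in> verts G. w x) | w. alpha2_feasible G w}"

end

theory Submission
  imports Defs
begin

lemma adj_sym: "adj H x y = adj H y x"
  unfolding adj_def by (simp add: insert_commute)

definition B2 :: "trigraph \<Rightarrow> nat \<Rightarrow> nat set" where
  "B2 G v = (\<Union>x\<in>closed_nbhd G v. closed_nbhd G x)"

lemma closed_nbhd_sub: "x \<in> verts G \<Longrightarrow> closed_nbhd G x \<subseteq> verts G"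
  unfolding closed_nbhd_def by auto

lemma B2_sub: "v \<in> verts G \<Longrightarrow> B2 G v \<subseteq> verts G"
proof -
  assume v: "v \<in> verts G"
  have "closed_nbhd G v \<subseteq> verts G" using closed_nbhd_sub[OF v] .
  then show ?thesis unfolding B2_def using closed_nbhd_sub by blast
qed

lemma self_B2: "v \<in> B2 G v" unfolding B2_def closed_nbhd_def by auto

lemma far: assumes "s \<in> verts G" "s \<notin> B2 G v" "v \<in> verts G"
  shows "dist_ge3 G v s \<and> dist_ge3 G s v"
proof -
  have a: "s \<noteq> v" using assms self_B2 by metis
  have b: "\<not> adj G v s" using assms unfolding B2_def closed_nbhd_def by auto
  have c: "\<not> (\<exists>z\<in>verts G. adj G v z \<and> adj G z s)"
    using assms unfolding B2_def closed_nbhd_def by auto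
  show ?thesis unfolding dist_ge3_def using a b c adj_sym by metis
qed

lemma verts_contract: "verts (contract H u v z) = insert z (verts H - {u,v})"
  by (simp add: contract_def Let_def)
lemma black_contract: "black (contract H u v z) = {e \<in> black H. u \<notin> e \<and> v \<notin> e}
   \<union> {{z, x} | x. x \<in> verts H - {u,v} \<and> {u, x} \<in> black H \<and> {v, x} \<in> black H}"
  by (simp add: contract_def Let_def)
lemma red_contract: "red (contract H u v z) = {e \<in> red H. u \<notin> e \<and> v \<notin> e}
   \<union> {{z, x} | x. x \<in> verts H - {u,v} \<and> (adj H u x \<or> adj H v x)
                        \<and> \<not> ({u, x} \<in> black H \<and> {v, x} \<in> black H)}"
  by (simp add: contract_def Let_def)

definition rep :: "trigraph \<Rightarrow> trigraph \<Rightarrow> (nat \<Rightarrow> nat set) \<Rightarrow> bool" where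
 "rep G H P \<longleftrightarrow> finite (verts H)
   \<and> (\<forall>a\<in>verts H. P a \<subseteq> verts G)
   \<and> (\<forall>x\<in>verts G. \<exists>a\<in>verts H. x \<in> P a)
   \<and> (\<forall>a\<in>verts H. \<forall>b\<in>verts H. a \<noteq> b \<longrightarrow> {a,b} \<in> black H \<longrightarrow> (\<forall>x\<in>P a. \<forall>y\<in>P b. adj G x y))
   \<and> (\<forall>a\<in>verts H. \<forall>b\<in>verts H. a \<noteq> b \<longrightarrow> \<not> adj H a b \<longrightarrow> (\<forall>x\<in>P a. \<forall>y\<in>P b. \<not> adj G x y))
   \<and> (\<forall>e\<in>black H \<union> red H. e \<subseteq> verts H)"

lemma rep_base: assumes "is_graph G" shows "rep G G (\<lambda>a. {a})"
proof -
  have t: "is_trigraph G" using assms is_graph_def by auto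
  have "\<forall>e\<in>black G \<union> red G. e \<subseteq> verts G"
    using t unfolding is_trigraph_def pairs_of_def by blast
  then show ?thesis using t unfolding rep_def is_trigraph_def adj_def by auto
qed

context
  fixes H :: trigraph and u v z :: nat
  assumes R6: "\<forall>e\<in>black H \<union> red H. e \<subseteq> verts H" and zn: "z \<notin> verts H"
begin

lemma bl_new: "a \<in> verts H - {u,v} \<Longrightarrow>
   {z,a} \<in> black (contract H u v z) \<longleftrightarrow> {u,a} \<in> black H \<and> {v,a} \<in> black H"
proof
  assume a: "a \<in> verts H - {u,v}" and "{z,a} \<in> black (contract H u v z)"
  then consider "{z,a} \<in> black H" | x where "{z,a} = {z,x}" "x \<in> verts H - {u,v}"
     "{u, x} \<in> black H" "{v, x} \<in> black H"
    unfolding black_contract by blast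
  then show "{u,a} \<in> black H \<and> {v,a} \<in> black H"
  proof cases
    case 1 then show ?thesis using R6 zn by blast
  next
    case 2 then have "a = x" using a zn by (auto simp: doubleton_eq_iff)
    then show ?thesis using 2 by auto
  qed
qed (auto simp: black_contract)

lemma adj_new: "a \<in> verts H - {u,v} \<Longrightarrow>
   adj (contract H u v z) z a \<longleftrightarrow> adj H u a \<or> adj H v a"
proof
  assume a: "a \<in> verts H - {u,v}" and h: "adj (contract H u v z) z a"
  show "adj H u a \<or> adj H v a"
  proof (cases "{z,a} \<in> black (contract H u v z)")
    case True then show ?thesis using bl_new[OF a] adj_def by auto
  next
    case False
    then have "{z,a} \<in> red (contract H u v z)" using h adj_def by auto
    then consider "{z,a} \<in> red H" | x where "{z,a} = {z,x}" "x \<in> verts H - {u,v}"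
       "adj H u x \<or> adj H v x"
      unfolding red_contract by blast
    then show ?thesis
    proof cases
      case 1 then show ?thesis using R6 zn by blast
    next
      case 2 then have "a = x" using a zn by (auto simp: doubleton_eq_iff)
      then show ?thesis using 2 by auto
    qed
  qed
next
  assume a: "a \<in> verts H - {u,v}" and h: "adj H u a \<or> adj H v a"
  show "adj (contract H u v z) z a"
  proof (cases "{u, a} \<in> black H \<and> {v, a} \<in> black H")
    case True then show ?thesis using bl_new[OF a] adj_def by auto
  next
    case False
    then have "{z,a} \<in> red (contract H u v z)" using a h unfolding red_contract by blast
    then show ?thesis using adj_def by auto
  qed
qed

lemma bl_old: "a \<in> verts H - {u,v} \<Longrightarrow> b \<in> verts H - {u,v} \<Longrightarrow>
   {a,b} \<in> black (contract H u v z) \<longleftrightarrow> {a,b} \<in> black H"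
  unfolding black_contract using zn by (auto simp: doubleton_eq_iff)

lemma adj_old: "a \<in> verts H - {u,v} \<Longrightarrow> b \<in> verts H - {u,v} \<Longrightarrow>
   adj (contract H u v z) a b \<longleftrightarrow> adj H a b"
  unfolding adj_def black_contract red_contract using zn by (auto simp: doubleton_eq_iff)

lemma R6_contract: "\<forall>e\<in>black (contract H u v z) \<union> red (contract H u v z). e \<subseteq> verts (contract H u v z)"
  unfolding black_contract red_contract verts_contract using R6 by blast

end


lemma rep_contract:
  assumes r: "rep G H P" and u: "u \<in> verts H" and v: "v \<in> verts H" and uv: "u \<noteq> v"
    and zn: "z \<notin> verts H"
  shows "rep G (contract H u v z) (P(z := P u \<union> P v))"
proof -
  let ?H = "contract H u v z" and ?P = "P(z := P u \<union> P v)" and ?W = "verts H - {u,v}"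
  have R0: "finite (verts H)" and R1: "\<forall>a\<in>verts H. P a \<subseteq> verts G"
   and R2: "\<forall>x\<in>verts G. \<exists>a\<in>verts H. x \<in> P a"
   and R4: "\<forall>a\<in>verts H. \<forall>b\<in>verts H. a \<noteq> b \<longrightarrow> {a,b} \<in> black H \<longrightarrow> (\<forall>x\<in>P a. \<forall>y\<in>P b. adj G x y)"
   and R5: "\<forall>a\<in>verts H. \<forall>b\<in>verts H. a \<noteq> b \<longrightarrow> \<not> adj H a b \<longrightarrow> (\<forall>x\<in>P a. \<forall>y\<in>P b. \<not> adj G x y)"
   and R6: "\<forall>e\<in>black H \<union> red H. e \<subseteq> verts H"
    using r unfolding rep_def by auto
  have Pw: "\<And>a. a \<in> ?W \<Longrightarrow> ?P a = P a" using zn by auto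
  have Pz: "?P z = P u \<union> P v" by simp
  have V: "verts ?H = insert z ?W" by (rule verts_contract)
  have S0: "finite (verts ?H)" using R0 V by simp
  have S1: "\<forall>a\<in>verts ?H. ?P a \<subseteq> verts G" using R1 u v V by auto
  have S2: "\<forall>x\<in>verts G. \<exists>a\<in>verts ?H. x \<in> ?P a"
  proof
    fix x assume "x \<in> verts G"
    then obtain a where a: "a \<in> verts H" "x \<in> P a" using R2 by auto
    show "\<exists>a\<in>verts ?H. x \<in> ?P a"
    proof (cases "a \<in> {u,v}")
      case True then show ?thesis using a V by (intro bexI[of _ z]) auto
    next
      case False then show ?thesis using a V Pw by (intro bexI[of _ a]) auto
    qed
  qed
  have S4z: "\<forall>x\<in>?P z. \<forall>y\<in>?P b. adj G x y" if b: "b \<in> ?W" "{z,b} \<in> black ?H" for b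
  proof -
    have "{u,b} \<in> black H" "{v,b} \<in> black H" using bl_new[OF R6 zn b(1)] b(2) by auto
    moreover have "b \<in> verts H" "u \<noteq> b" "v \<noteq> b" using b(1) by auto
    ultimately have "\<forall>x\<in>P u. \<forall>y\<in>P b. adj G x y" "\<forall>x\<in>P v. \<forall>y\<in>P b. adj G x y"
      using R4 u v by blast+
    then show ?thesis unfolding Pz Pw[OF b(1)] by blast
  qed
  have S4: "\<forall>a\<in>verts ?H. \<forall>b\<in>verts ?H. a \<noteq> b \<longrightarrow> {a,b} \<in> black ?H \<longrightarrow> (\<forall>x\<in>?P a. \<forall>y\<in>?P b. adj G x y)"
  proof (intro ballI impI)
    fix a b x y assume a: "a \<in> verts ?H" and b: "b \<in> verts ?H" and ab: "a \<noteq> b"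
      and e: "{a,b} \<in> black ?H" and x: "x \<in> ?P a" and y: "y \<in> ?P b"
    show "adj G x y"
    proof (cases "a = z")
      case True
      then have "b \<in> ?W" using ab b V by auto
      then show ?thesis using S4z[of b] True e x y by auto
    next
      case aF: False
      show ?thesis
      proof (cases "b = z")
        case True
        then have aW: "a \<in> ?W" using ab a V by auto
        have "{z,a} \<in> black ?H" using e True by (simp add: insert_commute)
        then have "adj G y x" using S4z[OF aW] True x y by blast
        then show ?thesis using adj_sym[of G x y] by simp
      next
        case False
        then have aW: "a \<in> ?W" and bW: "b \<in> ?W" using a b aF V by auto
        have "{a,b} \<in> black H" using bl_old[OF R6 zn aW bW] e by simp
        moreover have "x \<in> P a" "y \<in> P b" using x y Pw[OF aW] Pw[OF bW] by auto
        moreover have "a \<in> verts H" "b \<in> verts H" using aW bW by auto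
        ultimately show ?thesis using R4 ab by blast
      qed
    qed
  qed
  have S5z: "\<forall>x\<in>?P z. \<forall>y\<in>?P b. \<not> adj G x y" if b: "b \<in> ?W" "\<not> adj ?H z b" for b
  proof -
    have "\<not> adj H u b" "\<not> adj H v b" using adj_new[OF R6 zn b(1)] b(2) by auto
    moreover have "b \<in> verts H" "u \<noteq> b" "v \<noteq> b" using b(1) by auto
    ultimately have "\<forall>x\<in>P u. \<forall>y\<in>P b. \<not> adj G x y" "\<forall>x\<in>P v. \<forall>y\<in>P b. \<not> adj G x y"
      using R5 u v by blast+
    then show ?thesis unfolding Pz Pw[OF b(1)] by blast
  qed
  have S5: "\<forall>a\<in>verts ?H. \<forall>b\<in>verts ?H. a \<noteq> b \<longrightarrow> \<not> adj ?H a b \<longrightarrow> (\<forall>x\<in>?P a. \<forall>y\<in>?P b. \<not> adj G x y)"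
  proof (intro ballI impI)
    fix a b x y assume a: "a \<in> verts ?H" and b: "b \<in> verts ?H" and ab: "a \<noteq> b"
      and e: "\<not> adj ?H a b" and x: "x \<in> ?P a" and y: "y \<in> ?P b"
    show "\<not> adj G x y"
    proof (cases "a = z")
      case True
      then have "b \<in> ?W" using ab b V by auto
      then show ?thesis using S5z[of b] True e x y by auto
    next
      case aF: False
      show ?thesis
      proof (cases "b = z")
        case True
        then have aW: "a \<in> ?W" using ab a V by auto
        have "\<not> adj ?H z a" using e True adj_sym[of ?H a b] by simp
        then have "\<not> adj G y x" using S5z[OF aW] True x y by blast
        then show ?thesis using adj_sym[of G x y] by simp
      next
        case False
        then have aW: "a \<in> ?W" and bW: "b \<in> ?W" using a b aF V by auto
        have "\<not> adj H a b" using adj_old[OF R6 zn aW bW] e by simp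
        moreover have "x \<in> P a" "y \<in> P b" using x y Pw[OF aW] Pw[OF bW] by auto
        moreover have "a \<in> verts H" "b \<in> verts H" using aW bW by auto
        ultimately show ?thesis using R5 ab by blast
      qed
    qed
  qed
  have R6c: "\<forall>e\<in>black ?H \<union> red ?H. e \<subseteq> verts ?H" by (rule R6_contract[OF R6 zn])
  show ?thesis unfolding rep_def by (intro conjI S0 S1 S2 S4 S5 R6c)
qed



locale wctx =
  fixes G :: trigraph and w :: "nat \<Rightarrow> real"
  assumes fin: "finite (verts G)" and nn: "\<And>x. x \<in> verts G \<Longrightarrow> 0 \<le> w x"
    and nb: "\<And>x. x \<in> verts G \<Longrightarrow> sum w (closed_nbhd G x) \<le> 1"
begin

lemma smono: "X \<subseteq> Y \<Longrightarrow> Y \<subseteq> verts G \<Longrightarrow> sum w X \<le> sum w Y"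
  by (rule sum_mono2) (use fin finite_subset nn in auto)

lemma snn: "X \<subseteq> verts G \<Longrightarrow> 0 \<le> sum w X"
  by (rule sum_nonneg) (use nn in auto)

lemma sun: "X \<subseteq> verts G \<Longrightarrow> Y \<subseteq> verts G \<Longrightarrow> sum w (X \<union> Y) \<le> sum w X + sum w Y"
proof -
  assume X: "X \<subseteq> verts G" and Y: "Y \<subseteq> verts G"
  have fX: "finite X" and fY: "finite Y" using X Y fin finite_subset by auto
  have "0 \<le> sum w (X \<inter> Y)" using snn[of "X \<inter> Y"] X by auto
  then show ?thesis using sum_Un[OF fX fY, of w] by linarith
qed

lemma sUN: "finite I \<Longrightarrow> (\<And>i. i \<in> I \<Longrightarrow> X i \<subseteq> verts G) \<Longrightarrow>
   sum w (\<Union>i\<in>I. X i) \<le> (\<Sum>i\<in>I. sum w (X i))"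
proof (induction I rule: finite_induct)
  case empty then show ?case by simp
next
  case (insert i I)
  have s: "(\<Union>i\<in>I. X i) \<subseteq> verts G" using insert by auto
  have "sum w (\<Union>i\<in>insert i I. X i) = sum w (X i \<union> (\<Union>i\<in>I. X i))" by simp
  also have "\<dots> \<le> sum w (X i) + sum w (\<Union>i\<in>I. X i)" using sun s insert by auto
  also have "\<dots> \<le> sum w (X i) + (\<Sum>i\<in>I. sum w (X i))" using insert by auto
  finally show ?case using insert by simp
qed

lemma pos_elem: "X \<subseteq> verts G \<Longrightarrow> sum w X > 0 \<Longrightarrow> \<exists>x\<in>X. w x > 0"
  using sum_nonpos[of X w] by force

lemma w_le1: "x \<in> verts G \<Longrightarrow> w x \<le> 1"
proof -
  assume x: "x \<in> verts G"
  have "sum w {x} \<le> sum w (closed_nbhd G x)"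
    by (rule smono) (auto simp: closed_nbhd_def x closed_nbhd_sub[OF x])
  then show ?thesis using nb[OF x] by simp
qed

definition NP :: "(nat \<Rightarrow> nat set) \<Rightarrow> nat \<Rightarrow> nat set" where
  "NP P r = (\<Union>x\<in>P r. closed_nbhd G x)"

definition Rn :: "trigraph \<Rightarrow> nat \<Rightarrow> nat set" where
  "Rn H a = {b \<in> verts H. {a,b} \<in> red H}"

context
  fixes H P t
  assumes r: "rep G H P" and dt: "d_trigraph t H" and le2: "\<And>b. b \<in> verts H \<Longrightarrow> sum w (P b) \<le> 2"
begin

lemma R0: "finite (verts H)" and R1: "\<forall>a\<in>verts H. P a \<subseteq> verts G"
   and R2: "\<forall>x\<in>verts G. \<exists>a\<in>verts H. x \<in> P a"
   and R4: "\<forall>a\<in>verts H. \<forall>b\<in>verts H. a \<noteq> b \<longrightarrow> {a,b} \<in> black H \<longrightarrow> (\<forall>x\<in>P a. \<forall>y\<in>P b. adj G x y)"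
   and R5: "\<forall>a\<in>verts H. \<forall>b\<in>verts H. a \<noteq> b \<longrightarrow> \<not> adj H a b \<longrightarrow> (\<forall>x\<in>P a. \<forall>y\<in>P b. \<not> adj G x y)"
  using r unfolding rep_def by auto

lemma Rn_fin: "finite (Rn H a)" using R0 unfolding Rn_def by auto
lemma Rn_card: "a \<in> verts H \<Longrightarrow> card (Rn H a) \<le> t"
  using dt unfolding d_trigraph_def red_degree_def Rn_def by auto
lemma Rn_sub: "Rn H a \<subseteq> verts H" unfolding Rn_def by auto

lemma NP_sub: "r \<in> verts H \<Longrightarrow> NP P r \<subseteq> verts G"
  using R1 closed_nbhd_sub unfolding NP_def by blast

lemma nb_classify:
  assumes a: "a \<in> verts H" and x: "x \<in> P a" and y: "y \<in> closed_nbhd G x"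
  shows "y \<in> P a \<or> (\<exists>b\<in>Rn H a. y \<in> P b) \<or> (\<forall>x'\<in>P a. adj G x' y)"
proof -
  have xG: "x \<in> verts G" using R1 a x by auto
  show ?thesis
  proof (cases "y = x")
    case True then show ?thesis using x by auto
  next
    case False
    then have yG: "y \<in> verts G" and xy: "adj G x y" using y unfolding closed_nbhd_def by auto
    obtain b where b: "b \<in> verts H" "y \<in> P b" using R2 yG by auto
    show ?thesis
    proof (cases "b = a")
      case True then show ?thesis using b by auto
    next
      case False
      then have "adj H a b" using R5 a b x xy by metis
      then consider "{a,b} \<in> black H" | "{a,b} \<in> red H" unfolding adj_def by auto
      then show ?thesis
      proof cases
        case 1 then show ?thesis using R4 a b False by metis
      next
        case 2 then show ?thesis using b unfolding Rn_def by auto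
      qed
    qed
  qed
qed

lemma sum_Rn: "a \<in> verts H \<Longrightarrow> sum w (\<Union>b\<in>Rn H a. P b) \<le> 2 * real t"
proof -
  assume a: "a \<in> verts H"
  have "sum w (\<Union>b\<in>Rn H a. P b) \<le> (\<Sum>b\<in>Rn H a. sum w (P b))"
    using sUN[OF Rn_fin] R1 Rn_sub by blast
  also have "\<dots> \<le> of_nat (card (Rn H a)) * 2"
    by (rule sum_bounded_above) (use le2 Rn_sub in blast)
  also have "\<dots> \<le> 2 * real t" using Rn_card[OF a] by simp
  finally show ?thesis .
qed

lemma UN_Rn_sub: "(\<Union>b\<in>Rn H a. P b) \<subseteq> verts G" using R1 Rn_sub by blast

lemma NP_bound: assumes a: "a \<in> verts H" shows "sum w (NP P a) \<le> 3 + 2 * real t"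
proof (cases "P a = {}")
  case True then show ?thesis unfolding NP_def by simp
next
  case False
  then obtain x0 where x0: "x0 \<in> P a" by auto
  have x0G: "x0 \<in> verts G" using R1 a x0 by auto
  have aG: "P a \<subseteq> verts G" using R1 a by auto
  have NG: "closed_nbhd G x0 \<subseteq> verts G" using closed_nbhd_sub[OF x0G] .
  have UG: "(\<Union>b\<in>Rn H a. P b) \<subseteq> verts G" by (rule UN_Rn_sub)
  have sub: "NP P a \<subseteq> P a \<union> (\<Union>b\<in>Rn H a. P b) \<union> closed_nbhd G x0"
  proof
    fix y assume "y \<in> NP P a"
    then obtain x where x: "x \<in> P a" "y \<in> closed_nbhd G x" unfolding NP_def by auto
    have xG: "x \<in> verts G" using aG x(1) by auto
    have yG: "y \<in> verts G" using closed_nbhd_sub[OF xG] x(2) by auto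
    from nb_classify[OF a x]
    consider "y \<in> P a" | "\<exists>b\<in>Rn H a. y \<in> P b" | "\<forall>x'\<in>P a. adj G x' y" by blast
    then show "y \<in> P a \<union> (\<Union>b\<in>Rn H a. P b) \<union> closed_nbhd G x0"
    proof cases
      case 3
      then have "adj G x0 y" using x0 by blast
      then have "y \<in> closed_nbhd G x0" unfolding closed_nbhd_def using yG by blast
      then show ?thesis by blast
    qed auto
  qed
  have "sum w (NP P a) \<le> sum w (P a \<union> (\<Union>b\<in>Rn H a. P b) \<union> closed_nbhd G x0)"
    by (rule smono[OF sub]) (use aG NG UG in auto)
  also have "\<dots> \<le> sum w (P a \<union> (\<Union>b\<in>Rn H a. P b)) + sum w (closed_nbhd G x0)"
    by (rule sun) (use aG NG UG in auto)
  also have "\<dots> \<le> sum w (P a) + sum w (\<Union>b\<in>Rn H a. P b) + sum w (closed_nbhd G x0)"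
    using sun[OF aG UG] by linarith
  also have "\<dots> \<le> 3 + 2 * real t" using le2[OF a] sum_Rn[OF a] nb[OF x0G] by linarith
  finally show ?thesis .
qed

lemma NP_heavy: assumes a: "a \<in> verts H" and hv: "sum w (P a) > 1"
  shows "NP P a \<subseteq> P a \<union> (\<Union>b\<in>Rn H a. P b)"
proof
  have aG: "P a \<subseteq> verts G" using R1 a by auto
  fix y assume "y \<in> NP P a"
  then obtain x where x: "x \<in> P a" "y \<in> closed_nbhd G x" unfolding NP_def by auto
  have xG: "x \<in> verts G" using aG x(1) by auto
  have yG: "y \<in> verts G" using closed_nbhd_sub[OF xG] x(2) by auto
  from nb_classify[OF a x]
  consider "y \<in> P a" | "\<exists>b\<in>Rn H a. y \<in> P b" | "\<forall>x'\<in>P a. adj G x' y" by blast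
  then show "y \<in> P a \<union> (\<Union>b\<in>Rn H a. P b)"
  proof cases
    case 3
    then have "\<forall>x'\<in>P a. adj G y x'" using adj_sym by metis
    then have "P a \<subseteq> closed_nbhd G y" unfolding closed_nbhd_def using aG by blast
    then have "sum w (P a) \<le> sum w (closed_nbhd G y)"
      by (rule smono) (rule closed_nbhd_sub[OF yG])
    then show ?thesis using nb[OF yG] hv by linarith
  qed auto
qed

lemma heavy_good: assumes a: "a \<in> verts H" and hv: "sum w (P a) > 1" and v: "v \<in> P a"
  shows "sum w (B2 G v) \<le> (2 + 2 * real t) + real t * (3 + 2 * real t)"
proof -
  have aG: "P a \<subseteq> verts G" using R1 a by auto
  have UG: "(\<Union>b\<in>Rn H a. P b) \<subseteq> verts G" by (rule UN_Rn_sub)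
  have NPG: "(\<Union>r\<in>Rn H a. NP P r) \<subseteq> verts G" using NP_sub Rn_sub by blast
  have NPa: "NP P a \<subseteq> verts G" using NP_sub[OF a] .
  have sub: "B2 G v \<subseteq> NP P a \<union> (\<Union>r\<in>Rn H a. NP P r)"
  proof
    fix y assume "y \<in> B2 G v"
    then obtain x where x: "x \<in> closed_nbhd G v" "y \<in> closed_nbhd G x" unfolding B2_def by auto
    have "x \<in> NP P a" using x(1) v unfolding NP_def by auto
    then have "x \<in> P a \<or> (\<exists>b\<in>Rn H a. x \<in> P b)" using NP_heavy[OF a hv] by blast
    then show "y \<in> NP P a \<union> (\<Union>r\<in>Rn H a. NP P r)" using x(2) unfolding NP_def by blast
  qed
  have "sum w (B2 G v) \<le> sum w (NP P a \<union> (\<Union>r\<in>Rn H a. NP P r))"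
    by (rule smono[OF sub]) (use NPG NPa in auto)
  also have "\<dots> \<le> sum w (NP P a) + sum w (\<Union>r\<in>Rn H a. NP P r)"
    by (rule sun[OF NPa NPG])
  also have "sum w (NP P a) \<le> sum w (P a \<union> (\<Union>b\<in>Rn H a. P b))"
    by (rule smono[OF NP_heavy[OF a hv]]) (use aG UG in auto)
  also have "\<dots> \<le> sum w (P a) + sum w (\<Union>b\<in>Rn H a. P b)" by (rule sun[OF aG UG])
  also have "sum w (\<Union>r\<in>Rn H a. NP P r) \<le> (\<Sum>r\<in>Rn H a. sum w (NP P r))"
    by (rule sUN[OF Rn_fin]) (use NP_sub Rn_sub in blast)
  also have "\<dots> \<le> of_nat (card (Rn H a)) * (3 + 2 * real t)"
    by (rule sum_bounded_above) (use NP_bound Rn_sub in blast)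
  also have "\<dots> \<le> real t * (3 + 2 * real t)"
    using Rn_card[OF a] by (intro mult_right_mono) auto
  finally show ?thesis using le2[OF a] sum_Rn[OF a] by linarith
qed

end

lemma seq_good:
  assumes g: "is_graph G" and ds: "d_sequence t G Gs" and pos: "sum w (verts G) > 0"
  shows "\<exists>v\<in>verts G. w v > 0 \<and> sum w (B2 G v) \<le> (2 + 2 * real t) + real t * (3 + 2 * real t)"
proof (rule ccontr)
  let ?c = "(2 + 2 * real t) + real t * (3 + 2 * real t)"
  assume ng: "\<not> (\<exists>v\<in>verts G. w v > 0 \<and> sum w (B2 G v) \<le> ?c)"
  have ne: "Gs \<noteq> []" and hd: "hd Gs = G" and lst: "card (verts (last Gs)) = 1"
    and ctr: "\<And>i. Suc i < length Gs \<Longrightarrow> contracts_to (Gs ! i) (Gs ! Suc i)"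
    and dts: "\<And>H. H \<in> set Gs \<Longrightarrow> d_trigraph t H"
    using ds unfolding d_sequence_def by auto
  have step: "\<exists>P. rep G (Gs!i) P \<and> (\<forall>a\<in>verts (Gs!i). sum w (P a) \<le> 1)" if "i < length Gs" for i
    using that
  proof (induction i)
    case 0
    have "Gs ! 0 = G" using ne hd by (simp add: hd_conv_nth)
    moreover have "\<forall>a\<in>verts G. sum w ((\<lambda>a. {a}) a) \<le> 1" using w_le1 by simp
    ultimately show ?case using rep_base[OF g] by auto
  next
    case (Suc i)
    then obtain P where r: "rep G (Gs!i) P" and le1: "\<forall>a\<in>verts (Gs!i). sum w (P a) \<le> 1" by auto
    obtain u v z where u: "u \<in> verts (Gs!i)" and v: "v \<in> verts (Gs!i)" and uv: "u \<noteq> v"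
      and zn: "z \<notin> verts (Gs!i)" and eq: "Gs ! Suc i = contract (Gs!i) u v z"
      using ctr[OF Suc.prems] unfolding contracts_to_def by blast
    let ?P = "P(z := P u \<union> P v)"
    have r': "rep G (Gs ! Suc i) ?P" unfolding eq by (rule rep_contract[OF r u v uv zn])
    have R1: "\<forall>a\<in>verts (Gs!i). P a \<subseteq> verts G" using r unfolding rep_def by auto
    have R1': "\<forall>a\<in>verts (Gs ! Suc i). ?P a \<subseteq> verts G" using r' unfolding rep_def by auto
    have le2: "sum w (?P b) \<le> 2" if b: "b \<in> verts (Gs ! Suc i)" for b
    proof (cases "b = z")
      case True
      have "sum w (P u \<union> P v) \<le> sum w (P u) + sum w (P v)" using sun R1 u v by auto
      moreover have "sum w (P u) \<le> 1" "sum w (P v) \<le> 1" using le1 u v by auto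
      ultimately show ?thesis using True by simp
    next
      case False
      then have "b \<in> verts (Gs!i)" using b unfolding eq verts_contract by auto
      then show ?thesis using le1 False by fastforce
    qed
    have dt: "d_trigraph t (Gs ! Suc i)" using dts Suc.prems nth_mem by blast
    show ?case
    proof (cases "\<forall>a\<in>verts (Gs ! Suc i). sum w (?P a) \<le> 1")
      case True then show ?thesis using r' by blast
    next
      case False
      then obtain b where b: "b \<in> verts (Gs ! Suc i)" and hv: "sum w (?P b) > 1" by force
      obtain x where x: "x \<in> ?P b" "w x > 0" using pos_elem[of "?P b"] R1' b hv by force
      have xG: "x \<in> verts G" using R1' b x by blast
      have "sum w (B2 G x) \<le> ?c" using heavy_good[OF r' dt le2 b hv x(1)] by blast
      then show ?thesis using ng xG x by blast
    qed
  qed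
  have li: "length Gs - 1 < length Gs" using ne by simp
  have la: "Gs ! (length Gs - 1) = last Gs" using ne by (simp add: last_conv_nth)
  obtain P where r: "rep G (last Gs) P" and le1: "\<forall>a\<in>verts (last Gs). sum w (P a) \<le> 1"
    using step[OF li] la by auto
  obtain a where a: "verts (last Gs) = {a}" using lst card_1_singletonE by blast
  have "verts G \<subseteq> P a" "P a \<subseteq> verts G" using r a unfolding rep_def by auto
  then have "verts G = P a" by blast
  then have s1: "sum w (verts G) \<le> 1" using le1 a by auto
  obtain v where v: "v \<in> verts G" "w v > 0" using pos_elem[OF _ pos] by blast
  have "sum w (B2 G v) \<le> sum w (verts G)" by (rule smono[OF B2_sub[OF v(1)]]) simp
  moreover have "1 \<le> ?c" by simp
  ultimately have "sum w (B2 G v) \<le> ?c" using s1 by linarith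
  then show False using ng v by blast
qed

end



definition cst :: "nat \<Rightarrow> real" where
  "cst t = (2 + 2 * real t) + real t * (3 + 2 * real t)"

lemma cst_nn: "0 \<le> cst t" unfolding cst_def by simp

lemma greedy:
  assumes g: "is_graph G" and ds: "d_sequence t G Gs" and wc: "wctx G w"
  shows "A \<subseteq> verts G \<Longrightarrow> \<exists>S\<subseteq>A. (\<forall>x\<in>S. \<forall>y\<in>S. x \<noteq> y \<longrightarrow> dist_ge3 G x y)
            \<and> sum w A \<le> cst t * real (card S)"
proof (induction "card A" arbitrary: A rule: less_induct)
  case less
  have fin: "finite (verts G)" and nn: "\<And>x. x \<in> verts G \<Longrightarrow> 0 \<le> w x"
    and nb: "\<And>x. x \<in> verts G \<Longrightarrow> sum w (closed_nbhd G x) \<le> 1"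
    using wc unfolding wctx_def by auto
  have finA: "finite A" using less.prems fin finite_subset by auto
  define wA where "wA = (\<lambda>x. if x \<in> A then w x else 0)"
  have wcA: "wctx G wA"
  proof
    show "finite (verts G)" by (rule fin)
    show "0 \<le> wA x" if "x \<in> verts G" for x using nn that unfolding wA_def by auto
    show "sum wA (closed_nbhd G x) \<le> 1" if x: "x \<in> verts G" for x
    proof -
      have "sum wA (closed_nbhd G x) \<le> sum w (closed_nbhd G x)"
        by (rule sum_mono) (use nn closed_nbhd_sub[OF x] in \<open>auto simp: wA_def\<close>)
      then show ?thesis using nb[OF x] by linarith
    qed
  qed
  have sAB: "sum w (B \<inter> A) = sum wA B" if "finite B" for B
    unfolding wA_def by (rule sum.inter_restrict[OF that])
  show ?case
  proof (cases "sum w A > 0")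
    case False
    then show ?thesis by (intro exI[of _ "{}"]) auto
  next
    case True
    have "sum wA (verts G) = sum w A" using sAB[OF fin] less.prems
      by (metis inf.absorb_iff2)
    then have "sum wA (verts G) > 0" using True by simp
    then obtain v where v: "v \<in> verts G" "wA v > 0"
      and vb: "sum wA (B2 G v) \<le> (2 + 2 * real t) + real t * (3 + 2 * real t)"
      using wctx.seq_good[OF wcA g ds] by blast
    have vA: "v \<in> A" using v(2) unfolding wA_def by (auto split: if_splits)
    let ?B = "B2 G v"
    have finB: "finite ?B" using B2_sub[OF v(1)] fin finite_subset by auto
    have sB: "sum w (A \<inter> ?B) \<le> cst t" using sAB[OF finB] vb unfolding cst_def
      by (simp add: Int_commute)
    have lt: "card (A - ?B) < card A"
      by (rule psubset_card_mono[OF finA]) (use vA self_B2[of v G] in blast)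
    obtain S where S: "S \<subseteq> A - ?B" "\<forall>x\<in>S. \<forall>y\<in>S. x \<noteq> y \<longrightarrow> dist_ge3 G x y"
      "sum w (A - ?B) \<le> cst t * real (card S)"
      using less.hyps[OF lt] less.prems by blast
    have finS: "finite S" using S(1) finA finite_subset by blast
    have vS: "v \<notin> S" using S(1) self_B2[of v G] by blast
    have cardS: "card (insert v S) = Suc (card S)" using finS vS by simp
    have farS: "dist_ge3 G v s \<and> dist_ge3 G s v" if "s \<in> S" for s
      using far[of s G v] that S(1) less.prems v(1) by blast
    have dist: "\<forall>x\<in>insert v S. \<forall>y\<in>insert v S. x \<noteq> y \<longrightarrow> dist_ge3 G x y"
      using S(2) farS by blast
    have "sum w A = sum w (A \<inter> ?B) + sum w (A - ?B)" by (rule sum.Int_Diff[OF finA])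
    also have "\<dots> \<le> cst t + cst t * real (card S)" using sB S(3) by linarith
    also have "\<dots> = cst t * real (card (insert v S))" using cardS by (simp add: algebra_simps)
    finally show ?thesis using dist vA S(1) by (intro exI[of _ "insert v S"]) blast
  qed
qed

lemma seq_exists: "finite (verts H) \<Longrightarrow> card (verts H) = Suc k \<Longrightarrow>
  \<exists>Gs. Gs \<noteq> [] \<and> hd Gs = H \<and> card (verts (last Gs)) = 1
    \<and> (\<forall>i. Suc i < length Gs \<longrightarrow> contracts_to (Gs!i) (Gs!Suc i))
    \<and> (\<forall>H'\<in>set Gs. finite (verts H') \<and> card (verts H') \<le> Suc k)"
proof (induction k arbitrary: H)
  case 0
  then show ?case by (intro exI[of _ "[H]"]) auto
next
  case (Suc k)
  obtain u where u: "u \<in> verts H" using Suc.prems by (metis card.empty ex_in_conv nat.distinct(1))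
  have c1: "card (verts H - {u}) = Suc k" using Suc.prems u by simp
  obtain v where v: "v \<in> verts H - {u}" using c1 by (metis card.empty ex_in_conv nat.distinct(1))
  define z where "z = Suc (Max (verts H))"
  have zn: "z \<notin> verts H" using Max_ge[OF Suc.prems(1)] unfolding z_def by fastforce
  define H' where "H' = contract H u v z"
  have vH': "verts H' = insert z (verts H - {u,v})" unfolding H'_def by (rule verts_contract)
  have "card (verts H - {u,v}) = k" using c1 v Suc.prems(1)
    by (metis Diff_insert2 card_Diff_singleton diff_Suc_1 finite_Diff)
  then have cH': "card (verts H') = Suc k" and fH': "finite (verts H')"
    using vH' zn Suc.prems(1) by auto
  obtain Gs where Gs: "Gs \<noteq> []" "hd Gs = H'" "card (verts (last Gs)) = 1"
    "\<forall>i. Suc i < length Gs \<longrightarrow> contracts_to (Gs!i) (Gs!Suc i)"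
    "\<forall>H'\<in>set Gs. finite (verts H') \<and> card (verts H') \<le> Suc k"
    using Suc.IH[OF fH' cH'] by blast
  have ct: "contracts_to H H'" unfolding contracts_to_def H'_def using u v zn by blast
  have "\<forall>i. Suc i < length (H # Gs) \<longrightarrow> contracts_to ((H#Gs)!i) ((H#Gs)!Suc i)"
  proof (intro allI impI)
    fix i assume i: "Suc i < length (H # Gs)"
    show "contracts_to ((H#Gs)!i) ((H#Gs)!Suc i)"
    proof (cases i)
      case 0 then show ?thesis using ct Gs(1,2) by (simp add: hd_conv_nth)
    next
      case (Suc j) then show ?thesis using Gs(4) i by auto
    qed
  qed
  moreover have "\<forall>H'\<in>set (H#Gs). finite (verts H') \<and> card (verts H') \<le> Suc (Suc k)"
    using Gs(5) Suc.prems by fastforce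
  ultimately show ?case using Gs(1,3) by (intro exI[of _ "H # Gs"]) auto
qed

lemma tww_seq:
  assumes g: "is_graph G" and ne: "verts G \<noteq> {}" and tw: "tww G \<le> t"
  shows "\<exists>Gs. d_sequence t G Gs"
proof -
  have fin: "finite (verts G)" using g unfolding is_graph_def is_trigraph_def by auto
  obtain k where k: "card (verts G) = Suc k" using fin ne by (metis card_0_eq not0_implies_Suc)
  obtain Gs where Gs: "Gs \<noteq> []" "hd Gs = G" "card (verts (last Gs)) = 1"
    "\<forall>i. Suc i < length Gs \<longrightarrow> contracts_to (Gs!i) (Gs!Suc i)"
    "\<forall>H'\<in>set Gs. finite (verts H') \<and> card (verts H') \<le> Suc k"
    using seq_exists[OF fin k] by blast
  have "\<forall>H\<in>set Gs. d_trigraph (Suc k) H"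
  proof
    fix H assume H: "H \<in> set Gs"
    show "d_trigraph (Suc k) H" unfolding d_trigraph_def red_degree_def
    proof
      fix x assume "x \<in> verts H"
      have "card {y \<in> verts H. {x, y} \<in> red H} \<le> card (verts H)"
        using Gs(5) H by (intro card_mono) auto
      then show "card {y \<in> verts H. {x, y} \<in> red H} \<le> Suc k" using Gs(5) H by fastforce
    qed
  qed
  then have "d_sequence (Suc k) G Gs" using Gs unfolding d_sequence_def by blast
  then have ex: "Ex (d_sequence (Suc k) G)" by blast
  have "Ex (d_sequence (LEAST d. Ex (d_sequence d G)) G)" by (rule LeastI[of "\<lambda>d. Ex (d_sequence d G)", OF ex])
  then have "\<exists>Gs. d_sequence (tww G) G Gs" unfolding tww_def by simp
  then obtain Gs' where "d_sequence (tww G) G Gs'" by blast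
  then have "d_sequence t G Gs'" using tw unfolding d_sequence_def d_trigraph_def by fastforce
  then show ?thesis by blast
qed

lemma alpha2_ge:
  assumes g: "is_graph G" and S: "S \<subseteq> verts G" and d: "\<forall>x\<in>S. \<forall>y\<in>S. x \<noteq> y \<longrightarrow> dist_ge3 G x y"
  shows "card S \<le> alpha2 G"
proof -
  have fin: "finite (verts G)" using g unfolding is_graph_def is_trigraph_def by auto
  have "{card S |S. S \<subseteq> verts G \<and> (\<forall>x \<in> S. \<forall>y \<in> S. x \<noteq> y \<longrightarrow> dist_ge3 G x y)} \<subseteq> card ` Pow (verts G)"
    by blast
  then have "finite {card S |S. S \<subseteq> verts G \<and> (\<forall>x \<in> S. \<forall>y \<in> S. x \<noteq> y \<longrightarrow> dist_ge3 G x y)}"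
    using fin finite_subset by blast
  then show ?thesis unfolding alpha2_def using S d by (intro Max_ge) blast+
qed

theorem mainTheorem15:
  fixes t :: nat
  shows "\<exists>c :: real. \<forall>G. is_graph G \<and> tww G \<le> t \<longrightarrow>
           alpha2_star G \<le> c * real (alpha2 G)"
proof (intro exI allI impI)
  fix G assume "is_graph G \<and> tww G \<le> t"
  then have g: "is_graph G" and tw: "tww G \<le> t" by auto
  have fin: "finite (verts G)" using g unfolding is_graph_def is_trigraph_def by auto
  have bound: "sum w (verts G) \<le> cst t * real (alpha2 G)" if f: "alpha2_feasible G w" for w
  proof (cases "verts G = {}")
    case True then show ?thesis using cst_nn by simp
  next
    case False
    obtain Gs where ds: "d_sequence t G Gs" using tww_seq[OF g False tw] by blast
    have wc: "wctx G w" using f fin unfolding alpha2_feasible_def wctx_def by auto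
    obtain S where S: "S \<subseteq> verts G" "\<forall>x\<in>S. \<forall>y\<in>S. x \<noteq> y \<longrightarrow> dist_ge3 G x y"
      "sum w (verts G) \<le> cst t * real (card S)"
      using greedy[OF g ds wc, of "verts G"] by blast
    have "real (card S) \<le> real (alpha2 G)" using alpha2_ge[OF g S(1,2)] by simp
    then have "cst t * real (card S) \<le> cst t * real (alpha2 G)"
      using cst_nn by (rule mult_left_mono)
    then show ?thesis using S(3) by linarith
  qed
  have ne: "{(\<Sum>x \<in> verts G. w x) | w. alpha2_feasible G w} \<noteq> {}"
  proof -
    have "alpha2_feasible G (\<lambda>_. 0)" unfolding alpha2_feasible_def by simp
    then show ?thesis by blast
  qed
  show "alpha2_star G \<le> cst t * real (alpha2 G)"
    unfolding alpha2_star_def using bound by (intro cSup_least[OF ne]) blast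
qed

end
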